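(* Let $\mathcal{U}$ be a set and $\mathcal{L}=\{\ell_1,\dots,\ell_q\}$, $q\in\mathbb{N}$, a finite label set; let $F:\mathcal{U}\to\mathcal{L}$ (the classifier) and $\Phi:\mathcal{U}\to\mathbb{R}^d$ (the feature map) be measurable maps. Let $P_D$ be an (unknown) probability distribution on $\mathcal{U}\times\mathcal{L}$ and let $\mathcal{S}=\{(u_i,y_i)\}_{i=1}^M$ be a finite multi-set whose elements are sampled independently from $P_D$, with $F$ and $\Phi$ chosen independently of $\mathcal{S}$. For $j=1,\dots,q$ let $\mathcal{S}_j=\{(u,y)\in\mathcal{S}\mid F(u)=\ell_j\}$, $\mathcal{S}_{+,j}=\{(u,y)\in\mathcal{S}_j\mid y=\ell_j\}$, $\mathcal{S}_{-,j}=\{(u,y)\in\mathcal{S}_j\mid y\neq\ell_j\}$, with $M_{+,j}=|\mathcal{S}_{+,j}|$, $M_{-,j}=|\mathcal{S}_{-,j}|$, and suppose $\mathcal{S}_{+,j}$ and $\mathcal{S}_{-,j}$ are nonempty for every $j$. Let $\mathcal{H}$ be a class of measurable functions $\mathbb{R}^d\to\mathbb{R}$ and, for each $j$, let $h_j\in\mathcal{H}$ be selected independently of $\mathcal{S}$. Define the empirical distribution functions \[F_{+,j}(s)=\frac{1}{M_{+,j}}\sum_{(u,y)\in\mathcal{S}_{+,j}}\mathbf{1}_{h_j(\Phi(u))\le s},\qquad F_{-,j}(s)=\frac{1}{M_{-,j}}\sum_{(u,y)\in\mathcal{S}_{-,j}}\mathbf{1}_{h_j(\Phi(u))\le s},\]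 and let $\Delta_j\in(0,1)$, $j=1,\dots,q$. Let $\ell^{\times}\notin\mathcal{L}$ be an extra label, and define the corrector $\mathcal{A}:\mathcal{L}\times\mathbb{R}^d\to\mathcal{L}\cup\{\ell^{\times}\}$ by $\mathcal{A}(\ell_j,z)=\ell^{\times}$ if $h_j(z)\le F_{-,j}^{\dagger}(\Delta_j)$ and $\mathcal{A}(\ell_j,z)=\ell_j$ otherwise. Define $\rho,\psi:[0,1]\times\mathbb{N}\to\mathbb{R}$ by \[\rho(a,d)=\sup_{\varepsilon\in(0,1]}\max\{a-\varepsilon,0\}\bigl(1-2\exp(-2d\varepsilon^2)\bigr),\qquad \psi(a,d)=\inf_{\varepsilon\in(0,1]}\Bigl(2\exp(-2d\varepsilon^2)+\min\{1,a+\varepsilon\}\Bigr).\] Then for a new independent sample $(u,\ell)\sim P_D$ and each $j=1,\dots,q$, \[P\bigl(\mathcal{A}(F(u),\Phi(u))=\ell_j\mid F(u)=\ell_j,\ \ell=\ell_j\bigr)\ge 1-\psi\bigl(F_{+,j}(F_{-,j}^{\dagger}(\Delta_j)),M_{+,j}\bigr),\] and \[P\bigl(\mathcal{A}(F(u),\Phi(u))=\ell^{\times}\mid F(u)=\ell_j,\ \ell\neq\ell_j\bigr)\ge \rho(\Delta_j,M_{-,j}).\]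
   Context: For a monotone function $f:X\to Y$ between intervals of $\mathbb{R}$ (here $f=F_{-,j}$ on $\mathbb{R}$), the pseudo-inverse is $f^{\dagger}(y)=\inf\{x\in X\mid f(x)\ge y\}$. $\mathbf{1}_{A}$ denotes the indicator of the event/set $A$. The label $\ell^{\times}$ represents the corrector rejecting the classifier's decision. *)

theory Defs
  imports "HOL-Probability.Probability"
begin

definition Splus :: "('u \<Rightarrow> 'l) \<Rightarrow> nat \<Rightarrow> 'l \<Rightarrow> (nat \<Rightarrow> 'u \<times> 'l) \<Rightarrow> nat set" where
  "Splus F M l S = {i \<in> {..<M}. F (fst (S i)) = l \<and> snd (S i) = l}"

definition Sminus :: "('u \<Rightarrow> 'l) \<Rightarrow> nat \<Rightarrow> 'l \<Rightarrow> (nat \<Rightarrow> 'u \<times> 'l) \<Rightarrow> nat set" where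
  "Sminus F M l S = {i \<in> {..<M}. F (fst (S i)) = l \<and> snd (S i) \<noteq> l}"

definition ecdf :: "('u \<Rightarrow> real) \<Rightarrow> nat set \<Rightarrow> (nat \<Rightarrow> 'u \<times> 'l) \<Rightarrow> real \<Rightarrow> real" where
  "ecdf g I S s = (\<Sum>i\<in>I. indicator {..s} (g (fst (S i)))) / real (card I)"

definition pseudo_inv :: "(real \<Rightarrow> real) \<Rightarrow> real \<Rightarrow> real" where
  "pseudo_inv f y = Inf {x. f x \<ge> y}"

definition thr :: "('u \<Rightarrow> 'l) \<Rightarrow> ('u \<Rightarrow> 'z) \<Rightarrow> ('l \<Rightarrow> 'z \<Rightarrow> real) \<Rightarrow> ('l \<Rightarrow> real)
                   \<Rightarrow> nat \<Rightarrow> 'l \<Rightarrow> (nat \<Rightarrow> 'u \<times> 'l) \<Rightarrow> real" where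
  "thr F \<Phi> h \<Delta> M l S = pseudo_inv (ecdf (\<lambda>u. h l (\<Phi> u)) (Sminus F M l S) S) (\<Delta> l)"

definition corrector :: "'l \<Rightarrow> ('u \<Rightarrow> 'l) \<Rightarrow> ('u \<Rightarrow> 'z) \<Rightarrow> ('l \<Rightarrow> 'z \<Rightarrow> real) \<Rightarrow> ('l \<Rightarrow> real)
                   \<Rightarrow> nat \<Rightarrow> (nat \<Rightarrow> 'u \<times> 'l) \<Rightarrow> 'l \<Rightarrow> 'z \<Rightarrow> 'l" where
  "corrector lx F \<Phi> h \<Delta> M S l z = (if h l z \<le> thr F \<Phi> h \<Delta> M l S then lx else l)"

definition rho :: "real \<Rightarrow> nat \<Rightarrow> real" where
  "rho a d = (SUP \<epsilon>\<in>{0<..1}. max (a - \<epsilon>) 0 * (1 - 2 * exp (- 2 * real d * \<epsilon>^2)))"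

definition psi :: "real \<Rightarrow> nat \<Rightarrow> real" where
  "psi a d = (INF \<epsilon>\<in>{0<..1}. 2 * exp (- 2 * real d * \<epsilon>^2) + min 1 (a + \<epsilon>))"

end

theory Submission
  imports Defs
begin


lemma ins_distr:
  fixes PD :: "'a measure"
  assumes PD: "prob_space PD"
  shows "distr (PiM {..<M} (\<lambda>_. PD) \<Otimes>\<^sub>M PD) (PiM {..<Suc M} (\<lambda>_. PD)) (\<lambda>(S,x). S(M:=x))
         = PiM {..<Suc M} (\<lambda>_. PD)"
proof -
  interpret ps: product_prob_space "\<lambda>_::nat. PD" "UNIV"
    by (simp add: PD product_prob_space.intro product_prob_space_axioms_def product_sigma_finite_def prob_space_imp_sigma_finite)
  interpret PiP: prob_space "PiM {..<M} (\<lambda>_. PD)" by (intro prob_space_PiM PD)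
  interpret pp: pair_sigma_finite "PiM {..<M} (\<lambda>_. PD)" PD
    by (simp add: PD pair_sigma_finite.intro prob_space_imp_sigma_finite PiP.sigma_finite_measure_axioms)
  show ?thesis
  proof (rule ps.PiM_eqI)
    show "finite {..<Suc M}" by simp
    show "sets (distr (Pi\<^sub>M {..<M} (\<lambda>_. PD) \<Otimes>\<^sub>M PD) (Pi\<^sub>M {..<Suc M} (\<lambda>_. PD)) (\<lambda>(S, x). S(M := x))) = sets (Pi\<^sub>M {..<Suc M} (\<lambda>_. PD))"
      by simp
    fix A assume A: "\<And>i. i \<in> {..<Suc M} \<Longrightarrow> A i \<in> sets PD"
    have meas: "(\<lambda>(S, x). S(M := x)) \<in> measurable (Pi\<^sub>M {..<M} (\<lambda>_. PD) \<Otimes>\<^sub>M PD) (Pi\<^sub>M {..<Suc M} (\<lambda>_. PD))"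
    proof -
      have "(\<lambda>(S, x). S(M := x)) = (\<lambda>p. (fst p)(M := snd p))" by auto
      moreover have "(\<lambda>p. (fst p)(M := snd p)) \<in> measurable (Pi\<^sub>M {..<M} (\<lambda>_. PD) \<Otimes>\<^sub>M PD) (Pi\<^sub>M (insert M {..<M}) (\<lambda>_. PD))"
        by measurable
      ultimately show ?thesis by (simp add: lessThan_Suc)
    qed
    have pre: "(\<lambda>(S, x). S(M := x)) -` PiE {..<Suc M} A \<inter> space (Pi\<^sub>M {..<M} (\<lambda>_. PD) \<Otimes>\<^sub>M PD)
         = PiE {..<M} A \<times> A M"
      using A[THEN sets.sets_into_space]
      by (auto simp: space_pair_measure space_PiM PiE_iff extensional_def less_Suc_eq split: if_splits)
    have "emeasure (distr (Pi\<^sub>M {..<M} (\<lambda>_. PD) \<Otimes>\<^sub>M PD) (Pi\<^sub>M {..<Suc M} (\<lambda>_. PD)) (\<lambda>(S, x). S(M := x))) (PiE {..<Suc M} A)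
       = emeasure (Pi\<^sub>M {..<M} (\<lambda>_. PD) \<Otimes>\<^sub>M PD) (PiE {..<M} A \<times> A M)"
      using A by (subst emeasure_distr[OF meas]) (auto simp: pre intro!: sets_PiM_I_finite)
    also have "\<dots> = emeasure (Pi\<^sub>M {..<M} (\<lambda>_. PD)) (PiE {..<M} A) * emeasure PD (A M)"
      using A by (intro sigma_finite_measure.emeasure_pair_measure_Times[OF prob_space_imp_sigma_finite[OF PD]]) (auto intro!: sets_PiM_I_finite)
    also have "\<dots> = (\<Prod>i<M. emeasure PD (A i)) * emeasure PD (A M)"
      using A by (subst ps.emeasure_PiM) auto
    also have "\<dots> = (\<Prod>i\<in>{..<Suc M}. emeasure PD (A i))"
      by (simp add: lessThan_Suc mult.commute)
    finally show "emeasure (distr (Pi\<^sub>M {..<M} (\<lambda>_. PD) \<Otimes>\<^sub>M PD) (Pi\<^sub>M {..<Suc M} (\<lambda>_. PD)) (\<lambda>(S, x). S(M := x))) (PiE {..<Suc M} A)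
       = (\<Prod>i\<in>{..<Suc M}. emeasure PD (A i))" .
  qed
qed

lemma swap_distr:
  fixes PD :: "'a measure" and M :: nat
  assumes PD: "prob_space PD" and j: "j < M"
  shows "distr (PiM {..<M} (\<lambda>_. PD) \<Otimes>\<^sub>M PD) (PiM {..<M} (\<lambda>_. PD) \<Otimes>\<^sub>M PD) (\<lambda>(S,x). (S(j:=x), S j))
         = PiM {..<M} (\<lambda>_. PD) \<Otimes>\<^sub>M PD"
proof -
  let ?P = "PiM {..<M} (\<lambda>_. PD) \<Otimes>\<^sub>M PD"
  let ?Q = "PiM {..<Suc M} (\<lambda>_. PD)"
  define ins where "ins = (\<lambda>(S,x). S(M:=x) :: nat \<Rightarrow> 'a)"
  define proj where "proj = (\<lambda>\<omega>::nat\<Rightarrow>'a. (restrict \<omega> {..<M}, \<omega> M))"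
  define \<tau> where "\<tau> = (\<lambda>n::nat. if n = j then M else if n = M then j else n)"
  define re where "re = (\<lambda>\<omega>::nat\<Rightarrow>'a. \<lambda>n\<in>{..<Suc M}. \<omega> (\<tau> n))"
  have ins_m: "ins \<in> measurable ?P ?Q"
  proof -
    have "ins = (\<lambda>p. (fst p)(M := snd p))" by (auto simp: ins_def)
    moreover have "(\<lambda>p. (fst p)(M := snd p)) \<in> measurable ?P (Pi\<^sub>M (insert M {..<M}) (\<lambda>_. PD))"
      by measurable
    ultimately show ?thesis by (simp add: lessThan_Suc)
  qed
  have proj_m: "proj \<in> measurable ?Q ?P"
    unfolding proj_def by measurable
  have \<tau>: "inj_on \<tau> {..<Suc M}" "\<tau> \<in> {..<Suc M} \<rightarrow> {..<Suc M}"
    using j by (auto simp: \<tau>_def inj_on_def)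
  have re_m: "re \<in> measurable ?Q ?Q"
    unfolding re_def using \<tau> by (intro measurable_restrict) (auto simp: Pi_iff)
  have dins: "distr ?P ?Q ins = ?Q" unfolding ins_def by (rule ins_distr[OF PD])
  have dre: "distr ?Q ?Q re = ?Q"
    using distr_PiM_reindex[of "{..<Suc M}" "\<lambda>_. PD" \<tau> "{..<Suc M}"] PD \<tau> by (simp add: re_def)
  have dproj: "distr ?Q ?P proj = ?P"
  proof -
    have "distr ?Q ?P proj = distr (distr ?P ?Q ins) ?P proj" by (simp add: dins)
    also have "\<dots> = distr ?P ?P (\<lambda>x. proj (ins x))" using ins_m proj_m by (simp add: distr_distr comp_def)
    also have "\<dots> = distr ?P ?P (\<lambda>x. x)"
    proof (rule distr_cong)
      fix x assume "x \<in> space ?P"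
      then obtain S y where x: "x = (S, y)" and S: "S \<in> extensional {..<M}"
        by (auto simp: space_pair_measure space_PiM PiE_def)
      have "restrict (S(M:=y)) {..<M} = S"
      proof
        fix n show "restrict (S(M:=y)) {..<M} n = S n"
          using S by (cases "n < M") (auto simp: extensional_def)
      qed
      then show "proj (ins x) = x" by (simp add: x proj_def ins_def)
    qed simp_all
    finally show ?thesis by simp
  qed
  have "distr ?P ?P (\<lambda>(S,x). (S(j:=x), S j)) = distr ?P ?P (\<lambda>x. proj (re (ins x)))"
  proof (rule distr_cong)
    fix x assume "x \<in> space ?P"
    then obtain S y where x: "x = (S, y)" and S: "S \<in> extensional {..<M}"
      by (auto simp: space_pair_measure space_PiM PiE_def)
    have 1: "restrict (re (S(M:=y))) {..<M} = S(j:=y)"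
    proof
      fix n show "restrict (re (S(M:=y))) {..<M} n = (S(j:=y)) n"
        using S j by (cases "n < M") (auto simp: extensional_def re_def \<tau>_def)
    qed
    have 2: "re (S(M:=y)) M = S j" using j by (simp add: re_def \<tau>_def)
    show "(\<lambda>(S,x). (S(j:=x), S j)) x = proj (re (ins x))"
      by (simp add: x proj_def ins_def 1 2)
  qed simp_all
  also have "\<dots> = distr (distr (distr ?P ?Q ins) ?Q re) ?P proj"
    using ins_m proj_m re_m by (simp add: distr_distr comp_def)
  also have "\<dots> = ?P" by (simp add: dins dre dproj)
  finally show ?thesis .
qed

lemma swap_integral:
  fixes PD :: "'a measure" and M :: nat and f :: "((nat \<Rightarrow> 'a) \<times> 'a) \<Rightarrow> real"
  assumes PD: "prob_space PD" and j: "j < M"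
    and f: "f \<in> borel_measurable (PiM {..<M} (\<lambda>_. PD) \<Otimes>\<^sub>M PD)"
  shows "integral\<^sup>L (PiM {..<M} (\<lambda>_. PD) \<Otimes>\<^sub>M PD) (\<lambda>\<omega>. f (((fst \<omega>)(j := snd \<omega>)), fst \<omega> j))
       = integral\<^sup>L (PiM {..<M} (\<lambda>_. PD) \<Otimes>\<^sub>M PD) f"
proof -
  let ?P = "PiM {..<M} (\<lambda>_. PD) \<Otimes>\<^sub>M PD"
  have m: "(\<lambda>(S,x). (S(j:=x), S j)) \<in> measurable ?P ?P"
  proof -
    have "(\<lambda>(S,x). (S(j:=x), S j)) = (\<lambda>p. ((fst p)(j := snd p), fst p j))" by auto
    moreover have "(\<lambda>p. ((fst p)(j := snd p), fst p j)) \<in> measurable ?P ?P"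
    proof (rule measurable_Pair)
      show "(\<lambda>x. (fst x)(j := snd x)) \<in> measurable ?P (PiM {..<M} (\<lambda>_. PD))"
        by (rule measurable_fun_upd[where J="{..<M}"]) (use j in auto)
      have jI: "j \<in> {..<M}" using j by simp
      show "(\<lambda>x. fst x j) \<in> measurable ?P PD"
        by (rule measurable_comp[OF measurable_fst measurable_component_singleton[OF jI], unfolded comp_def])
    qed
    ultimately show ?thesis by simp
  qed
  have "integral\<^sup>L ?P f = integral\<^sup>L (distr ?P ?P (\<lambda>(S,x). (S(j:=x), S j))) f"
    by (simp add: swap_distr[OF PD j])
  also have "\<dots> = integral\<^sup>L ?P (\<lambda>\<omega>. f ((\<lambda>(S,x). (S(j:=x), S j)) \<omega>))"
    by (rule integral_distr[OF m f])
  finally show ?thesis by (simp add: split_beta)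
qed




lemma sum_ind_card:
  fixes w :: "nat \<Rightarrow> real"
  assumes "finite N"
  shows "(\<Sum>i\<in>N. indicator {..x} (w i)) = real (card {i\<in>N. w i \<le> x})"
proof -
  have "(\<Sum>i\<in>N. indicator {..x} (w i)) = (\<Sum>i\<in>N. (if w i \<le> x then 1 else 0 :: real))"
    by (intro sum.cong) (auto simp: indicator_def)
  also have "\<dots> = (\<Sum>i\<in>{i\<in>N. w i \<le> x}. 1)"
    by (rule sum.inter_filter[OF assms, symmetric])
  also have "\<dots> = real (card {i\<in>N. w i \<le> x})" by simp
  finally show ?thesis .
qed

lemma thr_char:
  fixes g :: "'u \<Rightarrow> real" and S :: "nat \<Rightarrow> 'u \<times> 'l"
  assumes fin: "finite N" and ne: "N \<noteq> {}" and d: "0 < \<delta>" "\<delta> \<le> 1"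
  shows "t \<le> pseudo_inv (ecdf g N S) \<delta> \<longleftrightarrow> real (card {j\<in>N. g (fst (S j)) < t}) < \<delta> * real (card N)"
proof -
  define w where "w i = g (fst (S i))" for i
  have cN: "real (card N) > 0" using fin ne by (simp add: card_gt_0_iff)
  have ec: "ecdf g N S x \<ge> \<delta> \<longleftrightarrow> real (card {i\<in>N. w i \<le> x}) \<ge> \<delta> * real (card N)" for x
  proof -
    have "ecdf g N S x = real (card {i\<in>N. w i \<le> x}) / real (card N)"
      unfolding ecdf_def w_def using sum_ind_card[OF fin, of x "\<lambda>i. g (fst (S i))"] by simp
    thus ?thesis using pos_le_divide_eq[OF cN] by simp
  qed
  define T where "T = {x. ecdf g N S x \<ge> \<delta>}"
  have "Max (w ` N) \<in> T"
  proof -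
    have "{i\<in>N. w i \<le> Max (w ` N)} = N" using fin by auto
    then show ?thesis using d unfolding T_def ec by (simp add: mult_left_le_one_le)
  qed
  hence Tne: "T \<noteq> {}" by auto
  have Tb: "bdd_below T"
  proof (rule bdd_belowI)
    fix x assume "x \<in> T"
    show "Min (w ` N) \<le> x"
    proof (rule ccontr)
      assume "\<not> Min (w ` N) \<le> x"
      moreover have "\<forall>i\<in>N. Min (w ` N) \<le> w i" using fin by auto
      ultimately have "{i\<in>N. w i \<le> x} = {}" by force
      hence c0: "real (card {i\<in>N. w i \<le> x}) = 0" by (simp only: card.empty of_nat_0)
      have "\<delta> * real (card N) > 0" using d cN by simp
      moreover have "real (card {i\<in>N. w i \<le> x}) \<ge> \<delta> * real (card N)" using \<open>x\<in>T\<close> unfolding T_def ec by simp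
      ultimately show False using c0 by linarith
    qed
  qed
  have "t \<le> pseudo_inv (ecdf g N S) \<delta> \<longleftrightarrow> (\<forall>x\<in>T. t \<le> x)"
    unfolding pseudo_inv_def T_def[symmetric] using Tne Tb by (rule le_cInf_iff)
  also have "\<dots> \<longleftrightarrow> real (card {j\<in>N. w j < t}) < \<delta> * real (card N)"
  proof
    assume H: "\<forall>x\<in>T. t \<le> x"
    show "real (card {j\<in>N. w j < t}) < \<delta> * real (card N)"
    proof (rule ccontr)
      assume C: "\<not> ?thesis"
      show False
      proof (cases "{j\<in>N. w j < t} = {}")
        case True
        hence "real (card {j\<in>N. w j < t}) = 0" by (simp only: card.empty of_nat_0)
        moreover have "\<delta> * real (card N) > 0" using d cN by simp
        ultimately show False using C by linarith
      next
        case False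
        define x where "x = Max (w ` {j\<in>N. w j < t})"
        have fin2: "finite (w ` {j\<in>N. w j < t})" using fin by simp
        have "x \<in> w ` {j\<in>N. w j < t}" unfolding x_def using False fin2 by (intro Max_in) auto
        hence xt: "x < t" by auto
        have "{j\<in>N. w j < t} \<subseteq> {i\<in>N. w i \<le> x}" unfolding x_def using fin2 by auto
        hence "card {j\<in>N. w j < t} \<le> card {i\<in>N. w i \<le> x}" using fin by (intro card_mono) auto
        hence "x \<in> T" using C unfolding T_def ec by simp
        thus False using H xt by auto
      qed
    qed
  next
    assume H: "real (card {j\<in>N. w j < t}) < \<delta> * real (card N)"
    show "\<forall>x\<in>T. t \<le> x"
    proof (intro ballI, rule ccontr)
      fix x assume xT: "x \<in> T" and nx: "\<not> t \<le> x"
      have "{i\<in>N. w i \<le> x} \<subseteq> {j\<in>N. w j < t}" using nx by auto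
      hence "card {i\<in>N. w i \<le> x} \<le> card {j\<in>N. w j < t}" using fin by (intro card_mono) auto
      thus False using xT H unfolding T_def ec by simp
    qed
  qed
  finally show ?thesis by (simp add: w_def)
qed



lemma comb_count:
  fixes V :: "nat \<Rightarrow> real" and c :: real
  assumes fin: "finite N" and c: "c \<le> real (card N)"
  shows "c \<le> real (card {j\<in>N. real (card {i\<in>N. V i < V j}) < c})"
proof (cases "{j\<in>N. \<not> real (card {i\<in>N. V i < V j}) < c} = {}")
  case True
  hence "{j\<in>N. real (card {i\<in>N. V i < V j}) < c} = N" by auto
  thus ?thesis using c by simp
next
  case False
  let ?A = "{j\<in>N. \<not> real (card {i\<in>N. V i < V j}) < c}"
  have finA: "finite ?A" using fin by simp
  have "Min (V ` ?A) \<in> V ` ?A" using finA False by (intro Min_in) auto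
  then obtain j0 where j0A: "j0 \<in> ?A" and j0m: "V j0 = Min (V ` ?A)" by auto
  have j0: "j0 \<in> ?A" "\<And>j. j \<in> ?A \<Longrightarrow> V j0 \<le> V j"
    using j0A j0m finA by auto
  have sub: "{i\<in>N. V i < V j0} \<subseteq> {j\<in>N. real (card {i\<in>N. V i < V j}) < c}"
    using j0(2) by force
  have "c \<le> real (card {i\<in>N. V i < V j0})" using j0(1) by simp
  also have "\<dots> \<le> real (card {j\<in>N. real (card {i\<in>N. V i < V j}) < c})"
    using sub fin by (simp add: card_mono)
  finally show ?thesis .
qed



lemma psi_ge:
  assumes "a \<le> 1"
  shows "a \<le> psi a d"
  unfolding psi_def
proof (rule cINF_greatest)
  show "{0<..1::real} \<noteq> {}" by auto
  fix e :: real assume "e \<in> {0<..1}"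
  thus "a \<le> 2 * exp (- 2 * real d * e\<^sup>2) + min 1 (a + e)"
  proof -
    have "a \<le> min 1 (a + e)" using assms \<open>e \<in> {0<..1}\<close> by simp
    moreover have "0 \<le> 2 * exp (- 2 * real d * e\<^sup>2)" by simp
    ultimately show ?thesis by linarith
  qed
qed

lemma rho_le:
  assumes d: "0 < \<Delta>" "\<Delta> < 1" and m: "1 \<le> m"
  shows "rho \<Delta> m \<le> \<Delta> * real m / (real m + 1)"
  unfolding rho_def
proof (rule cSUP_least)
  show "{0<..1::real} \<noteq> {}" by auto
  fix e :: real assume e: "e \<in> {0<..1}"
  have mp: "real m + 1 > 0" by simp
  have target: "\<Delta> - \<Delta> / (real m + 1) = \<Delta> * real m / (real m + 1)"
    using mp by (simp add: field_simps)
  have tnn: "0 \<le> \<Delta> * real m / (real m + 1)" using d by simp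
  show "max (\<Delta> - e) 0 * (1 - 2 * exp (- 2 * real m * e\<^sup>2)) \<le> \<Delta> * real m / (real m + 1)"
  proof (cases "\<Delta> \<le> e")
    case True thus ?thesis using tnn by simp
  next
    case False
    hence mx: "max (\<Delta> - e) 0 = \<Delta> - e" by simp
    show ?thesis
    proof (cases "e < \<Delta> / (real m + 1)")
      case True
      have "\<Delta> / (real m + 1) < 1 / (real m + 1)" using d mp by (simp add: divide_strict_right_mono)
      hence e1: "e < 1 / (real m + 1)" using True by linarith
      have "e\<^sup>2 < (1 / (real m + 1))\<^sup>2" using e e1 by (intro power_strict_mono) auto
      hence "2 * real m * e\<^sup>2 \<le> 2 * real m * (1 / (real m + 1))\<^sup>2"
        by (intro mult_left_mono) auto
      also have "\<dots> \<le> 1/2"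
      proof -
        have "0 \<le> (real m - 1)\<^sup>2" by simp
        hence "4 * real m \<le> (real m + 1)\<^sup>2" by (simp add: power2_eq_square algebra_simps)
        have pp: "(real m + 1)\<^sup>2 > 0" using mp by simp
        have "2 * real m * (1 / (real m + 1))\<^sup>2 = 2 * real m / (real m + 1)\<^sup>2"
          by (simp add: power_divide)
        also have "\<dots> \<le> 1/2" using pp \<open>4 * real m \<le> (real m + 1)\<^sup>2\<close> by (simp add: pos_divide_le_eq)
        finally show ?thesis .
      qed
      finally have "- 2 * real m * e\<^sup>2 \<ge> - 1/2" by simp
      hence "exp (- 2 * real m * e\<^sup>2) \<ge> 1/2"
        using exp_ge_add_one_self[of "- 2 * real m * e\<^sup>2"] by linarith
      hence "1 - 2 * exp (- 2 * real m * e\<^sup>2) \<le> 0" by simp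
      hence "(\<Delta> - e) * (1 - 2 * exp (- 2 * real m * e\<^sup>2)) \<le> 0"
        using False by (simp add: mult_nonneg_nonpos)
      thus ?thesis using mx tnn by simp
    next
      case False2: False
      have "(\<Delta> - e) * (1 - 2 * exp (- 2 * real m * e\<^sup>2)) \<le> (\<Delta> - e) * 1"
        using False by (intro mult_left_mono) auto
      also have "\<dots> \<le> \<Delta> - \<Delta> / (real m + 1)" using False2 by simp
      finally show ?thesis using mx target by simp
    qed
  qed
qed



locale setting =
  fixes MU :: "'u measure" and PD :: "('u \<times> 'l) measure" and L :: "'l set"
    and F :: "'u \<Rightarrow> 'l" and g :: "'u \<Rightarrow> real" and M :: nat and l :: 'l and \<delta> :: real
  assumes PD_prob: "prob_space PD"
    and PD_sets: "sets PD = sets (MU \<Otimes>\<^sub>M count_space L)"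
    and F_meas: "F \<in> MU \<rightarrow>\<^sub>M count_space L"
    and g_meas: "g \<in> borel_measurable MU"
    and finL: "finite L" and lL: "l \<in> L" and \<delta>: "0 < \<delta>" "\<delta> < 1"
begin

abbreviation "PS \<equiv> PiM {..<M} (\<lambda>_. PD)"
abbreviation "P \<equiv> PS \<Otimes>\<^sub>M PD"

definition pos where "pos x \<longleftrightarrow> F (fst x) = l \<and> snd x = l"
definition neg where "neg x \<longleftrightarrow> F (fst x) = l \<and> snd x \<noteq> l"
definition EE where "EE S \<longleftrightarrow> (\<forall>k\<in>L. Splus F M k S \<noteq> {} \<and> Sminus F M k S \<noteq> {})"

lemma mPD: "measurable PD N = measurable (MU \<Otimes>\<^sub>M count_space L) N"
  by (rule measurable_cong_sets[OF PD_sets refl])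

lemma Ffst_m: "(\<lambda>x. F (fst x)) \<in> measurable PD (count_space L)"
  unfolding mPD using F_meas by measurable

lemma snd_m: "snd \<in> measurable PD (count_space L)"
  unfolding mPD by measurable

lemma gfst_m[measurable]: "(\<lambda>x. g (fst x)) \<in> borel_measurable PD"
  unfolding mPD using g_meas by measurable

lemma pred_fun_L:
  assumes f: "f \<in> measurable PD (count_space L)"
  shows "Measurable.pred PD (\<lambda>x. f x = k)"
proof -
  have "{x \<in> space PD. f x = k} = f -` ({k} \<inter> L) \<inter> space PD"
    using measurable_space[OF f] by auto
  also have "\<dots> \<in> sets PD" by (rule measurable_sets[OF f]) auto
  finally show ?thesis unfolding Measurable.pred_def .
qed

lemma predF[measurable]: "Measurable.pred PD (\<lambda>x. F (fst x) = k)"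
  by (rule pred_fun_L[OF Ffst_m])

lemma predsnd[measurable]: "Measurable.pred PD (\<lambda>x. snd x = k)"
  by (rule pred_fun_L[OF snd_m])

lemma pos_m[measurable]: "Measurable.pred PD pos"
  unfolding pos_def[abs_def] by measurable

lemma neg_m[measurable]: "Measurable.pred PD neg"
  unfolding neg_def[abs_def] by measurable

lemma comp_m: "i < M \<Longrightarrow> X \<in> measurable N PS \<Longrightarrow> (\<lambda>\<omega>. X \<omega> i) \<in> measurable N PD"
  by (rule measurable_compose[OF _ measurable_component_singleton]) auto

lemma EE_alt: "EE S \<longleftrightarrow> (\<forall>k\<in>L. (\<exists>i\<in>{..<M}. F (fst (S i)) = k \<and> snd (S i) = k) \<and> (\<exists>i\<in>{..<M}. F (fst (S i)) = k \<and> snd (S i) \<noteq> k))"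
  unfolding EE_def Splus_def Sminus_def by blast

lemma pred_ex:
  assumes X: "X \<in> measurable N PS" and R: "Measurable.pred PD R"
  shows "Measurable.pred N (\<lambda>\<omega>. \<exists>i\<in>{..<M}. R (X \<omega> i))"
proof (intro pred_intros_finite finite_lessThan)
  fix i assume "i \<in> {..<M}"
  hence m: "(\<lambda>\<omega>. X \<omega> i) \<in> measurable N PD" by (intro comp_m[OF _ X]) auto
  show "Measurable.pred N (\<lambda>\<omega>. R (X \<omega> i))"
    using measurable_compose[OF m R] by (simp add: comp_def)
qed

lemma EE_m:
  assumes X: "X \<in> measurable N PS"
  shows "Measurable.pred N (\<lambda>\<omega>. EE (X \<omega>))"
proof -
  have 1: "Measurable.pred N (\<lambda>\<omega>. \<exists>i\<in>{..<M}. F (fst (X \<omega> i)) = k \<and> snd (X \<omega> i) = k)" for k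
  proof -
    have "Measurable.pred PD (\<lambda>x. F (fst x) = k \<and> snd x = k)" by measurable
    from pred_ex[OF X this] show ?thesis by simp
  qed
  have 2: "Measurable.pred N (\<lambda>\<omega>. \<exists>i\<in>{..<M}. F (fst (X \<omega> i)) = k \<and> snd (X \<omega> i) \<noteq> k)" for k
  proof -
    have "Measurable.pred PD (\<lambda>x. F (fst x) = k \<and> snd x \<noteq> k)" by measurable
    from pred_ex[OF X this] show ?thesis by simp
  qed
  show ?thesis unfolding EE_alt
    by (intro pred_intros_finite pred_intros_logic finL 1 2)
qed

definition cntv :: "(nat \<Rightarrow> 'u \<times> 'l) \<Rightarrow> real \<Rightarrow> real" where
  "cntv S t = (\<Sum>i<M. if neg (S i) \<and> g (fst (S i)) < t then 1 else 0)"
definition mmv :: "(nat \<Rightarrow> 'u \<times> 'l) \<Rightarrow> real" where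
  "mmv S = (\<Sum>i<M. if neg (S i) then 1 else 0)"
definition ppv :: "(nat \<Rightarrow> 'u \<times> 'l) \<Rightarrow> real" where
  "ppv S = (\<Sum>i<M. if pos (S i) then 1 else 0)"
definition rejv :: "(nat \<Rightarrow> 'u \<times> 'l) \<Rightarrow> real \<Rightarrow> bool" where
  "rejv S t \<longleftrightarrow> cntv S t < \<delta> * mmv S"
definition aav :: "(nat \<Rightarrow> 'u \<times> 'l) \<Rightarrow> real" where
  "aav S = (\<Sum>i<M. if pos (S i) \<and> rejv S (g (fst (S i))) then 1 else 0) / ppv S"


lemma cntv_m[measurable]:
  assumes [measurable]: "X \<in> measurable N PS" "y \<in> borel_measurable N"
  shows "(\<lambda>\<omega>. cntv (X \<omega>) (y \<omega>)) \<in> borel_measurable N"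
  unfolding cntv_def
proof (rule borel_measurable_sum)
  fix i assume "i \<in> {..<M}"
  hence [measurable]: "(\<lambda>\<omega>. X \<omega> i) \<in> measurable N PD" by (intro comp_m) auto
  show "(\<lambda>\<omega>. if neg (X \<omega> i) \<and> g (fst (X \<omega> i)) < y \<omega> then 1 else 0 :: real) \<in> borel_measurable N"
    by measurable
qed

lemma mmv_m[measurable]:
  assumes [measurable]: "X \<in> measurable N PS"
  shows "(\<lambda>\<omega>. mmv (X \<omega>)) \<in> borel_measurable N"
  unfolding mmv_def
proof (rule borel_measurable_sum)
  fix i assume "i \<in> {..<M}"
  hence [measurable]: "(\<lambda>\<omega>. X \<omega> i) \<in> measurable N PD" by (intro comp_m) auto
  show "(\<lambda>\<omega>. if neg (X \<omega> i) then 1 else 0 :: real) \<in> borel_measurable N"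
    by measurable
qed

lemma ppv_m[measurable]:
  assumes [measurable]: "X \<in> measurable N PS"
  shows "(\<lambda>\<omega>. ppv (X \<omega>)) \<in> borel_measurable N"
  unfolding ppv_def
proof (rule borel_measurable_sum)
  fix i assume "i \<in> {..<M}"
  hence [measurable]: "(\<lambda>\<omega>. X \<omega> i) \<in> measurable N PD" by (intro comp_m) auto
  show "(\<lambda>\<omega>. if pos (X \<omega> i) then 1 else 0 :: real) \<in> borel_measurable N"
    by measurable
qed

lemma rejv_m[measurable]:
  assumes [measurable]: "X \<in> measurable N PS" "y \<in> borel_measurable N"
  shows "Measurable.pred N (\<lambda>\<omega>. rejv (X \<omega>) (y \<omega>))"
  unfolding rejv_def by measurable

lemma aav_m[measurable]:
  assumes [measurable]: "X \<in> measurable N PS"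
  shows "(\<lambda>\<omega>. aav (X \<omega>)) \<in> borel_measurable N"
  unfolding aav_def
proof (intro borel_measurable_divide borel_measurable_sum)
  fix i assume "i \<in> {..<M}"
  hence [measurable]: "(\<lambda>\<omega>. X \<omega> i) \<in> measurable N PD" by (intro comp_m) auto
  show "(\<lambda>\<omega>. if pos (X \<omega> i) \<and> rejv (X \<omega>) (g (fst (X \<omega> i))) then 1 else 0 :: real) \<in> borel_measurable N"
    by measurable
qed measurable

lemma EE_P[measurable]: "Measurable.pred P (\<lambda>\<omega>. EE (fst \<omega>))"
  by (rule EE_m) measurable

lemma P_prob: "prob_space P"
proof -
  interpret A: prob_space PS by (intro prob_space_PiM PD_prob)
  interpret B: prob_space PD by (rule PD_prob)
  show ?thesis by (intro prob_space_pair) unfold_locales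
qed

lemma bint:
  fixes f :: "_ \<Rightarrow> real"
  assumes "f \<in> borel_measurable P" "\<And>\<omega>. \<omega> \<in> space P \<Longrightarrow> \<bar>f \<omega>\<bar> \<le> 1"
  shows "integrable P f"
proof -
  interpret prob_space P by (rule P_prob)
  show ?thesis using assms by (intro integrable_const_bound[where B=1] AE_I2) auto
qed

lemma swap_sum_eq:
  fixes f h :: "nat \<Rightarrow> _ \<Rightarrow> real"
  assumes fm: "\<And>i. i < M \<Longrightarrow> f i \<in> borel_measurable P"
    and fb: "\<And>i \<omega>. i < M \<Longrightarrow> \<omega> \<in> space P \<Longrightarrow> \<bar>f i \<omega>\<bar> \<le> 1"
    and hm: "\<And>i. i < M \<Longrightarrow> h i \<in> borel_measurable P"
    and hb: "\<And>i \<omega>. i < M \<Longrightarrow> \<omega> \<in> space P \<Longrightarrow> \<bar>h i \<omega>\<bar> \<le> 1"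
    and eq: "\<And>i \<omega>. i < M \<Longrightarrow> \<omega> \<in> space P \<Longrightarrow> f i ((fst \<omega>)(i := snd \<omega>), fst \<omega> i) = h i \<omega>"
  shows "integral\<^sup>L P (\<lambda>\<omega>. \<Sum>i<M. f i \<omega>) = integral\<^sup>L P (\<lambda>\<omega>. \<Sum>i<M. h i \<omega>)"
proof -
  have "integral\<^sup>L P (\<lambda>\<omega>. \<Sum>i<M. f i \<omega>) = (\<Sum>i<M. integral\<^sup>L P (f i))"
  proof (rule Bochner_Integration.integral_sum)
    fix i assume "i \<in> {..<M}"
    thus "integrable P (f i)" using fm fb by (intro bint) auto
  qed
  also have "\<dots> = (\<Sum>i<M. integral\<^sup>L P (h i))"
  proof (rule sum.cong)
    fix i assume i: "i \<in> {..<M}"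
    have "integral\<^sup>L P (f i) = integral\<^sup>L P (\<lambda>\<omega>. f i ((fst \<omega>)(i := snd \<omega>), fst \<omega> i))"
      using i fm by (intro swap_integral[symmetric] PD_prob) auto
    also have "\<dots> = integral\<^sup>L P (h i)"
      using i eq by (intro Bochner_Integration.integral_cong) auto
    finally show "integral\<^sup>L P (f i) = integral\<^sup>L P (h i)" .
  qed simp
  also have "\<dots> = integral\<^sup>L P (\<lambda>\<omega>. \<Sum>i<M. h i \<omega>)"
    by (rule Bochner_Integration.integral_sum[symmetric], rule bint) (use hm hb in auto)
  finally show ?thesis .
qed

lemma sum_upd:
  fixes f :: "'u \<times> 'l \<Rightarrow> real"
  assumes "finite A" "i \<in> A"
  shows "(\<Sum>j\<in>A. f ((S(i:=x)) j)) = (\<Sum>j\<in>A. f (S j)) - f (S i) + f x"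
proof -
  have "(\<Sum>j\<in>A. f ((S(i:=x)) j)) = f x + (\<Sum>j\<in>A-{i}. f ((S(i:=x)) j))"
    using assms by (subst sum.remove[of A i]) auto
  also have "(\<Sum>j\<in>A-{i}. f ((S(i:=x)) j)) = (\<Sum>j\<in>A-{i}. f (S j))"
    by (intro sum.cong) auto
  also have "(\<Sum>j\<in>A. f (S j)) = f (S i) + (\<Sum>j\<in>A-{i}. f (S j))"
    using assms by (subst sum.remove[of A i]) auto
  ultimately show ?thesis by simp
qed

lemma cntv_upd: "i < M \<Longrightarrow> cntv (S(i:=x)) t = cntv S t - (if neg (S i) \<and> g (fst (S i)) < t then 1 else 0)
    + (if neg x \<and> g (fst x) < t then 1 else 0)"
  unfolding cntv_def by (rule sum_upd[where f="\<lambda>y. if neg y \<and> g (fst y) < t then 1 else 0"]) auto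

lemma upd_same_class:
  assumes i: "i < M" and c: "F (fst x) = F (fst (S i))" "snd x = snd (S i)"
  shows "EE (S(i:=x)) = EE S" "ppv (S(i:=x)) = ppv S" "mmv (S(i:=x)) = mmv S"
proof -
  have a: "F (fst ((S(i:=x)) j)) = F (fst (S j))" "snd ((S(i:=x)) j) = snd (S j)" for j
    using c by (cases "j = i", simp_all)
  show "EE (S(i:=x)) = EE S" unfolding EE_alt a ..
  show "ppv (S(i:=x)) = ppv S" unfolding ppv_def pos_def a ..
  show "mmv (S(i:=x)) = mmv S" unfolding mmv_def neg_def a ..
qed

lemma upd_neg:
  assumes i: "i < M" and nx: "neg x" and ns: "neg (S i)"
  shows "EE (S(i:=x)) = EE S" "mmv (S(i:=x)) = mmv S"
proof -
  have a: "(F (fst ((S(i:=x)) j)) = k \<and> snd ((S(i:=x)) j) = k) = (F (fst (S j)) = k \<and> snd (S j) = k)" for j k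
    using nx ns by (cases "j = i") (auto simp: neg_def)
  have b: "(F (fst ((S(i:=x)) j)) = k \<and> snd ((S(i:=x)) j) \<noteq> k) = (F (fst (S j)) = k \<and> snd (S j) \<noteq> k)" for j k
    using nx ns by (cases "j = i") (auto simp: neg_def)
  have c: "neg ((S(i:=x)) j) = neg (S j)" for j
    using nx ns by (cases "j = i") auto
  show "EE (S(i:=x)) = EE S" unfolding EE_alt a b ..
  show "mmv (S(i:=x)) = mmv S" unfolding mmv_def c ..
qed

lemma ppv_ge:
  assumes "i < M" "pos (S i)"
  shows "ppv S \<ge> 1"
proof -
  have "(if pos (S i) then 1 else 0::real) \<le> (\<Sum>j<M. if pos (S j) then 1 else 0)"
    by (rule member_le_sum) (use assms in auto)
  then show ?thesis using assms(2) by (simp add: ppv_def)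
qed

lemma mmv_ge:
  assumes "i < M" "neg (S i)"
  shows "mmv S \<ge> 1"
proof -
  have "(if neg (S i) then 1 else 0::real) \<le> (\<Sum>j<M. if neg (S j) then 1 else 0)"
    by (rule member_le_sum) (use assms in auto)
  then show ?thesis using assms(2) by (simp add: mmv_def)
qed

lemma EE_pos:
  assumes "EE S" shows "\<exists>i<M. pos (S i)"
proof -
  have "\<exists>i\<in>{..<M}. F (fst (S i)) = l \<and> snd (S i) = l" using assms lL unfolding EE_alt by blast
  thus ?thesis unfolding pos_def by auto
qed

lemma EE_neg:
  assumes "EE S" shows "\<exists>i<M. neg (S i)"
proof -
  have "\<exists>i\<in>{..<M}. F (fst (S i)) = l \<and> snd (S i) \<noteq> l" using assms lL unfolding EE_alt by blast
  thus ?thesis unfolding neg_def by auto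
qed

definition "A1 = {\<omega>\<in>space P. EE (fst \<omega>) \<and> pos (snd \<omega>)}"
definition "A2 = {\<omega>\<in>space P. EE (fst \<omega>) \<and> neg (snd \<omega>)}"
definition "R1 = {\<omega>\<in>space P. rejv (fst \<omega>) (g (fst (snd \<omega>)))}"

lemma claim1_core: "integral\<^sup>L P (\<lambda>\<omega>. indicator A1 \<omega> * aav (fst \<omega>)) = measure P (A1 \<inter> R1)"
proof -
  define f where "f i \<omega> = (if EE (fst \<omega>) \<and> pos (snd \<omega>) \<and> pos (fst \<omega> i) \<and> rejv (fst \<omega>) (g (fst (fst \<omega> i))) then 1 else 0) / ppv (fst \<omega>)" for i \<omega>
  define h where "h i \<omega> = (if EE (fst \<omega>) \<and> pos (snd \<omega>) \<and> pos (fst \<omega> i) \<and> rejv (fst \<omega>) (g (fst (snd \<omega>))) then 1 else 0) / ppv (fst \<omega>)" for i \<omega>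
  have fm: "f i \<in> borel_measurable P" if "i < M" for i
  proof -
    have [measurable]: "(\<lambda>\<omega>. fst \<omega> i) \<in> measurable P PD" using that by (intro comp_m) auto
    show ?thesis unfolding f_def by measurable
  qed
  have hm: "h i \<in> borel_measurable P" if "i < M" for i
  proof -
    have [measurable]: "(\<lambda>\<omega>. fst \<omega> i) \<in> measurable P PD" using that by (intro comp_m) auto
    show ?thesis unfolding h_def by measurable
  qed
  have fb: "\<bar>f i \<omega>\<bar> \<le> 1" if "i < M" for i \<omega>
    using ppv_ge[OF that, of "fst \<omega>"] by (auto simp: f_def)
  have hb: "\<bar>h i \<omega>\<bar> \<le> 1" if "i < M" for i \<omega>
    using ppv_ge[OF that, of "fst \<omega>"] by (auto simp: h_def)
  have eq: "f i ((fst \<omega>)(i := snd \<omega>), fst \<omega> i) = h i \<omega>" if i: "i < M" for i \<omega>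
  proof (cases "pos (fst \<omega> i) \<and> pos (snd \<omega>)")
    case True
    let ?S = "fst \<omega>" and ?x = "snd \<omega>"
    have c: "F (fst ?x) = F (fst (?S i))" "snd ?x = snd (?S i)" using True by (auto simp: pos_def)
    have nn: "\<not> neg (?S i)" "\<not> neg ?x" using True by (auto simp: pos_def neg_def)
    have r: "rejv (?S(i := ?x)) t = rejv ?S t" for t
      unfolding rejv_def cntv_upd[OF i] upd_same_class[where i=i and x="snd \<omega>" and S="fst \<omega>", OF i c] using nn by simp
    show ?thesis using True unfolding f_def h_def
      by (simp add: upd_same_class[where i=i and x="snd \<omega>" and S="fst \<omega>", OF i c] r)
  next
    case False
    thus ?thesis unfolding f_def h_def by auto
  qed
  have "integral\<^sup>L P (\<lambda>\<omega>. indicator A1 \<omega> * aav (fst \<omega>)) = integral\<^sup>L P (\<lambda>\<omega>. \<Sum>i<M. f i \<omega>)"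
  proof (rule Bochner_Integration.integral_cong[OF refl])
    fix \<omega> assume "\<omega> \<in> space P"
    show "indicator A1 \<omega> * aav (fst \<omega>) = (\<Sum>i<M. f i \<omega>)"
    proof (cases "\<omega> \<in> A1")
      case True
      hence "EE (fst \<omega>) \<and> pos (snd \<omega>)" by (simp add: A1_def)
      thus ?thesis using True unfolding f_def aav_def
        by (simp add: sum_divide_distrib)
    next
      case False
      hence "\<not> (EE (fst \<omega>) \<and> pos (snd \<omega>))" using \<open>\<omega> \<in> space P\<close> by (simp add: A1_def)
      thus ?thesis using False unfolding f_def by auto
    qed
  qed
  also have "\<dots> = integral\<^sup>L P (\<lambda>\<omega>. \<Sum>i<M. h i \<omega>)"
    by (rule swap_sum_eq[OF fm fb hm hb eq])
  also have "\<dots> = integral\<^sup>L P (indicator (A1 \<inter> R1))"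
  proof (rule Bochner_Integration.integral_cong[OF refl])
    fix \<omega> assume w: "\<omega> \<in> space P"
    show "(\<Sum>i<M. h i \<omega>) = indicator (A1 \<inter> R1) \<omega>"
    proof (cases "\<omega> \<in> A1 \<inter> R1")
      case True
      hence c: "EE (fst \<omega>) \<and> pos (snd \<omega>) \<and> rejv (fst \<omega>) (g (fst (snd \<omega>)))" by (simp add: A1_def R1_def)
      then obtain i where "i < M" "pos (fst \<omega> i)" using EE_pos by blast
      hence pp: "ppv (fst \<omega>) \<ge> 1" by (rule ppv_ge)
      have "(\<Sum>i<M. h i \<omega>) = (\<Sum>i<M. (if pos (fst \<omega> i) then 1 else 0)) / ppv (fst \<omega>)"
        unfolding h_def sum_divide_distrib using c by simp
      also have "\<dots> = 1" using pp unfolding ppv_def[symmetric] by simp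
      finally show ?thesis using True by simp
    next
      case False
      hence "\<not> (EE (fst \<omega>) \<and> pos (snd \<omega>) \<and> rejv (fst \<omega>) (g (fst (snd \<omega>))))"
        using w by (simp add: A1_def R1_def)
      thus ?thesis using False unfolding h_def by auto
    qed
  qed
  also have "\<dots> = measure P (A1 \<inter> R1)"
    by (simp add: A1_def R1_def Int_absorb2 Int_assoc)
  finally show ?thesis .
qed


lemma card_sum: "finite A \<Longrightarrow> real (card {i\<in>A. Q i}) = (\<Sum>i\<in>A. if Q i then 1 else 0)"
proof -
  assume fin: "finite A"
  have "real (card {i\<in>A. Q i}) = (\<Sum>i\<in>{i\<in>A. Q i}. 1)" by simp
  also have "\<dots> = (\<Sum>i\<in>A. if Q i then 1 else 0)" by (rule sum.inter_filter[OF fin])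
  finally show ?thesis .
qed

lemma mmv_nonneg: "mmv S \<ge> 0"
  unfolding mmv_def by (intro sum_nonneg) auto

lemma comb_point:
  assumes nx: "neg x"
  shows "\<delta> * mmv S \<le> (\<Sum>j<M. if neg (S j) \<and> cntv S (g (fst (S j))) + (if neg x \<and> g (fst x) < g (fst (S j)) then 1 else 0) < \<delta> * mmv S then 1 else 0)
     + (if rejv S (g (fst x)) then 1 else 0)"
proof -
  define Z where "Z = S(M := x)"
  define V where "V i = g (fst (Z i))" for i
  define N where "N = {i\<in>{..<Suc M}. neg (Z i)}"
  have Zl: "Z i = S i" if "i < M" for i using that by (simp add: Z_def)
  have ZM: "Z M = x" by (simp add: Z_def)
  have finN: "finite N" by (simp add: N_def)
  have cnt: "real (card {i\<in>N. V i < t}) = cntv S t + (if g (fst x) < t then 1 else 0)" for t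
  proof -
    have "real (card {i\<in>N. V i < t}) = real (card {i\<in>{..<Suc M}. neg (Z i) \<and> V i < t})"
      by (rule arg_cong[where f="\<lambda>A. real (card A)"]) (auto simp: N_def)
    also have "\<dots> = (\<Sum>i<Suc M. if neg (Z i) \<and> V i < t then 1 else 0)"
      by (rule card_sum) simp
    also have "\<dots> = (\<Sum>i<M. if neg (Z i) \<and> V i < t then 1 else 0) + (if neg (Z M) \<and> V M < t then 1 else 0)"
      by (rule sum.lessThan_Suc)
    also have "(\<Sum>i<M. if neg (Z i) \<and> V i < t then 1 else 0) = cntv S t"
      unfolding cntv_def V_def by (intro sum.cong) (auto simp: Zl)
    finally show ?thesis using nx by (simp add: ZM V_def)
  qed
  have cardN: "real (card N) = mmv S + 1"
  proof -
    have "real (card N) = (\<Sum>i<Suc M. if neg (Z i) then 1 else 0)"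
      unfolding N_def by (rule card_sum) simp
    also have "\<dots> = (\<Sum>i<M. if neg (Z i) then 1 else 0) + (if neg (Z M) then 1 else 0)"
      by (rule sum.lessThan_Suc)
    also have "(\<Sum>i<M. if neg (Z i) then 1 else 0) = mmv S"
      unfolding mmv_def by (intro sum.cong) (auto simp: Zl)
    finally show ?thesis using nx by (simp add: ZM)
  qed
  have c: "\<delta> * mmv S \<le> real (card N)"
  proof -
    have "\<delta> * mmv S \<le> 1 * mmv S" using \<delta> mmv_nonneg by (intro mult_right_mono) auto
    thus ?thesis using cardN by simp
  qed
  have "\<delta> * mmv S \<le> real (card {j\<in>N. real (card {i\<in>N. V i < V j}) < \<delta> * mmv S})"
    by (rule comb_count[OF finN c])
  also have "{j\<in>N. real (card {i\<in>N. V i < V j}) < \<delta> * mmv S}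
      = {j\<in>{..<Suc M}. neg (Z j) \<and> cntv S (V j) + (if g (fst x) < V j then 1 else 0) < \<delta> * mmv S}"
    unfolding cnt by (auto simp: N_def)
  also have "real (card \<dots>) = (\<Sum>j<Suc M. if neg (Z j) \<and> cntv S (V j) + (if g (fst x) < V j then 1 else 0) < \<delta> * mmv S then 1 else 0)"
    by (rule card_sum) simp
  also have "\<dots> = (\<Sum>j<M. if neg (Z j) \<and> cntv S (V j) + (if g (fst x) < V j then 1 else 0) < \<delta> * mmv S then 1 else 0)
      + (if neg (Z M) \<and> cntv S (V M) + (if g (fst x) < V M then 1 else 0) < \<delta> * mmv S then 1 else 0)"
    by (rule sum.lessThan_Suc)
  also have "(\<Sum>j<M. if neg (Z j) \<and> cntv S (V j) + (if g (fst x) < V j then 1 else 0) < \<delta> * mmv S then 1 else 0)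
      = (\<Sum>j<M. if neg (S j) \<and> cntv S (g (fst (S j))) + (if neg x \<and> g (fst x) < g (fst (S j)) then 1 else 0) < \<delta> * mmv S then 1 else 0)"
    using nx by (intro sum.cong) (auto simp: Zl V_def)
  also have "(if neg (Z M) \<and> cntv S (V M) + (if g (fst x) < V M then 1 else 0) < \<delta> * mmv S then 1 else 0::real)
      = (if rejv S (g (fst x)) then 1 else 0)"
    using nx by (simp add: ZM V_def rejv_def)
  finally show ?thesis .
qed

lemma claim2_core:
  "integral\<^sup>L P (\<lambda>\<omega>. indicator A2 \<omega> * (\<delta> * mmv (fst \<omega>) / (mmv (fst \<omega>) + 1))) \<le> measure P (A2 \<inter> R1)"
proof -
  define Rj where "Rj j \<omega> \<longleftrightarrow> cntv (fst \<omega>) (g (fst (fst \<omega> j))) + (if neg (snd \<omega>) \<and> g (fst (snd \<omega>)) < g (fst (fst \<omega> j)) then 1 else 0) < \<delta> * mmv (fst \<omega>)" for j \<omega>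
  define f where "f j \<omega> = (if EE (fst \<omega>) \<and> neg (snd \<omega>) \<and> neg (fst \<omega> j) \<and> Rj j \<omega> then 1 else 0) / (mmv (fst \<omega>) + 1)" for j \<omega>
  define h where "h j \<omega> = (if EE (fst \<omega>) \<and> neg (snd \<omega>) \<and> neg (fst \<omega> j) \<and> rejv (fst \<omega>) (g (fst (snd \<omega>))) then 1 else 0) / (mmv (fst \<omega>) + 1)" for j \<omega>
  define TM where "TM \<omega> = (if EE (fst \<omega>) \<and> neg (snd \<omega>) \<and> rejv (fst \<omega>) (g (fst (snd \<omega>))) then 1 else 0) / (mmv (fst \<omega>) + 1)" for \<omega>
  have mp: "mmv S + 1 \<ge> 1" for S using mmv_nonneg[of S] by simp
  have fm: "f i \<in> borel_measurable P" if "i < M" for i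
  proof -
    have [measurable]: "(\<lambda>\<omega>. fst \<omega> i) \<in> measurable P PD" using that by (intro comp_m) auto
    show ?thesis unfolding f_def Rj_def by measurable
  qed
  have hm: "h i \<in> borel_measurable P" if "i < M" for i
  proof -
    have [measurable]: "(\<lambda>\<omega>. fst \<omega> i) \<in> measurable P PD" using that by (intro comp_m) auto
    show ?thesis unfolding h_def by measurable
  qed
  have TMm: "TM \<in> borel_measurable P" unfolding TM_def by measurable
  have fb: "\<bar>f i \<omega>\<bar> \<le> 1" for i \<omega>
    using mp[of "fst \<omega>"] by (auto simp: f_def)
  have hb: "\<bar>h i \<omega>\<bar> \<le> 1" for i \<omega>
    using mp[of "fst \<omega>"] by (auto simp: h_def)
  have TMb: "\<bar>TM \<omega>\<bar> \<le> 1" for \<omega>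
    using mp[of "fst \<omega>"] by (auto simp: TM_def)
  have eq: "f i ((fst \<omega>)(i := snd \<omega>), fst \<omega> i) = h i \<omega>" if i: "i < M" for i \<omega>
  proof (cases "neg (fst \<omega> i) \<and> neg (snd \<omega>)")
    case True
    let ?S = "fst \<omega>" and ?x = "snd \<omega>"
    have u: "EE (?S(i := ?x)) = EE ?S" "mmv (?S(i := ?x)) = mmv ?S"
      using upd_neg[of i ?x ?S] i True by auto
    have cu: "cntv (?S(i := ?x)) (g (fst ?x)) = cntv ?S (g (fst ?x)) - (if g (fst (?S i)) < g (fst ?x) then 1 else 0)"
      using cntv_upd[OF i, of ?S ?x "g (fst ?x)"] True by simp
    have "Rj i ((fst \<omega>)(i := snd \<omega>), fst \<omega> i) = rejv ?S (g (fst ?x))"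
      unfolding Rj_def rejv_def using True i by (simp add: u cu)
    thus ?thesis using True i unfolding f_def h_def by (simp add: u)
  next
    case False
    thus ?thesis unfolding f_def h_def by auto
  qed
  have "measure P (A2 \<inter> R1) = integral\<^sup>L P (indicator (A2 \<inter> R1))"
    by (simp add: A2_def R1_def Int_absorb2 Int_assoc)
  also have "\<dots> = integral\<^sup>L P (\<lambda>\<omega>. (\<Sum>i<M. h i \<omega>) + TM \<omega>)"
  proof (rule Bochner_Integration.integral_cong[OF refl])
    fix \<omega> assume w: "\<omega> \<in> space P"
    show "indicator (A2 \<inter> R1) \<omega> = (\<Sum>i<M. h i \<omega>) + TM \<omega>"
    proof (cases "\<omega> \<in> A2 \<inter> R1")
      case True
      hence c: "EE (fst \<omega>) \<and> neg (snd \<omega>) \<and> rejv (fst \<omega>) (g (fst (snd \<omega>)))" by (simp add: A2_def R1_def)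
      have pp: "mmv (fst \<omega>) + 1 > 0" using mp[of "fst \<omega>"] by simp
      have "(\<Sum>i<M. h i \<omega>) + TM \<omega> = ((\<Sum>i<M. (if neg (fst \<omega> i) then 1 else 0)) + 1) / (mmv (fst \<omega>) + 1)"
        unfolding h_def TM_def using c by (simp add: sum_divide_distrib add_divide_distrib)
      also have "\<dots> = 1" using pp unfolding mmv_def[symmetric] by simp
      finally show ?thesis using True by simp
    next
      case False
      hence "\<not> (EE (fst \<omega>) \<and> neg (snd \<omega>) \<and> rejv (fst \<omega>) (g (fst (snd \<omega>))))"
        using w by (simp add: A2_def R1_def)
      thus ?thesis using False unfolding h_def TM_def by auto
    qed
  qed
  also have "\<dots> = integral\<^sup>L P (\<lambda>\<omega>. \<Sum>i<M. h i \<omega>) + integral\<^sup>L P TM"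
  proof (rule Bochner_Integration.integral_add)
    show "integrable P (\<lambda>\<omega>. \<Sum>i<M. h i \<omega>)"
      by (rule Bochner_Integration.integrable_sum, rule bint) (use hm hb in auto)
    show "integrable P TM" using TMm TMb by (intro bint) auto
  qed
  also have "integral\<^sup>L P (\<lambda>\<omega>. \<Sum>i<M. h i \<omega>) = integral\<^sup>L P (\<lambda>\<omega>. \<Sum>i<M. f i \<omega>)"
    by (rule swap_sum_eq[OF fm fb hm hb eq, symmetric])
  also have "integral\<^sup>L P (\<lambda>\<omega>. \<Sum>i<M. f i \<omega>) + integral\<^sup>L P TM = integral\<^sup>L P (\<lambda>\<omega>. (\<Sum>i<M. f i \<omega>) + TM \<omega>)"
  proof (rule Bochner_Integration.integral_add[symmetric])
    show "integrable P (\<lambda>\<omega>. \<Sum>i<M. f i \<omega>)"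
      by (rule Bochner_Integration.integrable_sum, rule bint) (use fm fb in auto)
    show "integrable P TM" using TMm TMb by (intro bint) auto
  qed
  finally have eq2: "measure P (A2 \<inter> R1) = integral\<^sup>L P (\<lambda>\<omega>. (\<Sum>i<M. f i \<omega>) + TM \<omega>)" .
  have "integral\<^sup>L P (\<lambda>\<omega>. indicator A2 \<omega> * (\<delta> * mmv (fst \<omega>) / (mmv (fst \<omega>) + 1)))
      \<le> integral\<^sup>L P (\<lambda>\<omega>. (\<Sum>i<M. f i \<omega>) + TM \<omega>)"
  proof (rule integral_mono)
    show "integrable P (\<lambda>\<omega>. indicator A2 \<omega> * (\<delta> * mmv (fst \<omega>) / (mmv (fst \<omega>) + 1)))"
    proof (rule bint)
      have [measurable]: "A2 \<in> sets P" unfolding A2_def by measurable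
      show "(\<lambda>\<omega>. indicator A2 \<omega> * (\<delta> * mmv (fst \<omega>) / (mmv (fst \<omega>) + 1))) \<in> borel_measurable P"
        by measurable
      fix \<omega> :: "(nat \<Rightarrow> 'u \<times> 'l) \<times> 'u \<times> 'l"
      have "0 \<le> \<delta> * mmv (fst \<omega>) / (mmv (fst \<omega>) + 1)" using \<delta> mmv_nonneg[of "fst \<omega>"] by simp
      moreover have "\<delta> * mmv (fst \<omega>) / (mmv (fst \<omega>) + 1) \<le> 1"
      proof -
        have "\<delta> * mmv (fst \<omega>) \<le> mmv (fst \<omega>) + 1"
          using mult_left_le_one_le[of "mmv (fst \<omega>)" \<delta>] \<delta> mmv_nonneg[of "fst \<omega>"] by linarith
        thus ?thesis using mmv_nonneg[of "fst \<omega>"] by (simp add: divide_le_eq_1)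
      qed
      ultimately have "\<bar>\<delta> * mmv (fst \<omega>) / (mmv (fst \<omega>) + 1)\<bar> \<le> 1" by linarith
      thus "\<bar>indicator A2 \<omega> * (\<delta> * mmv (fst \<omega>) / (mmv (fst \<omega>) + 1))\<bar> \<le> 1"
        by (cases "\<omega> \<in> A2") (simp_all only: indicator_simps mult_1 mult_0 abs_0, simp_all)
    qed
    show "integrable P (\<lambda>\<omega>. (\<Sum>i<M. f i \<omega>) + TM \<omega>)"
    proof (rule Bochner_Integration.integrable_add)
      show "integrable P (\<lambda>\<omega>. \<Sum>i<M. f i \<omega>)"
        by (rule Bochner_Integration.integrable_sum, rule bint) (use fm fb in auto)
      show "integrable P TM" using TMm TMb by (intro bint) auto
    qed
  next
    fix \<omega> assume w: "\<omega> \<in> space P"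
    show "indicator A2 \<omega> * (\<delta> * mmv (fst \<omega>) / (mmv (fst \<omega>) + 1)) \<le> (\<Sum>i<M. f i \<omega>) + TM \<omega>"
    proof (cases "\<omega> \<in> A2")
      case True
      hence c: "EE (fst \<omega>) \<and> neg (snd \<omega>)" by (simp add: A2_def)
      have pp: "mmv (fst \<omega>) + 1 > 0" using mp[of "fst \<omega>"] by simp
      have "(\<Sum>i<M. f i \<omega>) + TM \<omega> = ((\<Sum>j<M. if neg (fst \<omega> j) \<and> Rj j \<omega> then 1 else 0) + (if rejv (fst \<omega>) (g (fst (snd \<omega>))) then 1 else 0)) / (mmv (fst \<omega>) + 1)"
        unfolding f_def TM_def using c by (simp add: sum_divide_distrib add_divide_distrib)
      moreover have "\<delta> * mmv (fst \<omega>) \<le> (\<Sum>j<M. if neg (fst \<omega> j) \<and> Rj j \<omega> then 1 else 0) + (if rejv (fst \<omega>) (g (fst (snd \<omega>))) then 1 else 0)"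
        using comb_point[of "snd \<omega>" "fst \<omega>"] c unfolding Rj_def by simp
      ultimately show ?thesis using True pp by (simp add: divide_right_mono)
    next
      case False
      hence "\<not> (EE (fst \<omega>) \<and> neg (snd \<omega>))" using w by (simp add: A2_def)
      thus ?thesis using False unfolding f_def TM_def by auto
    qed
  qed
  thus ?thesis using eq2 by simp
qed


lemma Sminus_eq: "Sminus F M l S = {i\<in>{..<M}. neg (S i)}"
  unfolding Sminus_def neg_def by simp

lemma Splus_eq: "Splus F M l S = {i\<in>{..<M}. pos (S i)}"
  unfolding Splus_def pos_def by simp

lemma card_Sminus: "real (card (Sminus F M l S)) = mmv S"
  unfolding Sminus_eq mmv_def by (rule card_sum) simp

lemma card_Splus: "real (card (Splus F M l S)) = ppv S"
  unfolding Splus_eq ppv_def by (rule card_sum) simp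

lemma thr_rej:
  assumes "EE S"
  shows "t \<le> pseudo_inv (ecdf g (Sminus F M l S) S) \<delta> \<longleftrightarrow> rejv S t"
proof -
  have ne: "Sminus F M l S \<noteq> {}" using EE_neg[OF assms] unfolding Sminus_eq by auto
  have fin: "finite (Sminus F M l S)" unfolding Sminus_eq by simp
  have "real (card {j\<in>Sminus F M l S. g (fst (S j)) < t}) = real (card {i\<in>{..<M}. neg (S i) \<and> g (fst (S i)) < t})"
    unfolding Sminus_eq by (rule arg_cong[where f="\<lambda>A. real (card A)"]) auto
  also have "\<dots> = cntv S t" unfolding cntv_def by (rule card_sum) simp
  finally have c: "real (card {j\<in>Sminus F M l S. g (fst (S j)) < t}) = cntv S t" .
  show ?thesis
    unfolding thr_char[OF fin ne \<delta>(1) less_imp_le[OF \<delta>(2)]] c card_Sminus rejv_def ..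
qed

lemma ecdf_aav:
  assumes "EE S"
  shows "ecdf g (Splus F M l S) S (pseudo_inv (ecdf g (Sminus F M l S) S) \<delta>) = aav S"
proof -
  let ?t = "pseudo_inv (ecdf g (Sminus F M l S) S) \<delta>"
  have "(\<Sum>i\<in>Splus F M l S. indicator {..?t} (g (fst (S i)))) = (\<Sum>i\<in>{i\<in>{..<M}. pos (S i)}. (if rejv S (g (fst (S i))) then 1 else 0 :: real))"
    unfolding Splus_eq by (intro sum.cong) (auto simp: indicator_def thr_rej[OF assms])
  also have "\<dots> = (\<Sum>i<M. if pos (S i) then (if rejv S (g (fst (S i))) then 1 else 0) else 0)"
    by (rule sum.inter_filter) simp
  also have "\<dots> = (\<Sum>i<M. if pos (S i) \<and> rejv S (g (fst (S i))) then 1 else 0)"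
    by (intro sum.cong) auto
  finally show ?thesis unfolding ecdf_def aav_def card_Splus by simp
qed

lemma aav_bounds: "0 \<le> aav S" "aav S \<le> 1"
proof -
  have num: "(\<Sum>i<M. if pos (S i) \<and> rejv S (g (fst (S i))) then 1 else 0) \<le> ppv S"
    unfolding ppv_def by (intro sum_mono) auto
  have nn: "0 \<le> (\<Sum>i<M. if pos (S i) \<and> rejv S (g (fst (S i))) then 1 else 0::real)"
    by (intro sum_nonneg) auto
  have pp: "0 \<le> ppv S" unfolding ppv_def by (intro sum_nonneg) auto
  show "0 \<le> aav S" unfolding aav_def using nn pp by simp
  show "aav S \<le> 1"
  proof (cases "ppv S = 0")
    case True thus ?thesis by (simp add: aav_def)
  next
    case False
    hence "ppv S > 0" using pp by simp
    thus ?thesis unfolding aav_def using num by (simp add: divide_le_eq_1)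
  qed
qed

lemma A1_m[measurable]: "A1 \<in> sets P" unfolding A1_def by measurable
lemma A2_m[measurable]: "A2 \<in> sets P" unfolding A2_def by measurable
lemma R1_m[measurable]: "R1 \<in> sets P" unfolding R1_def by measurable


end


theorem theorem1:
  fixes MU :: "'u measure" and PD :: "('u \<times> 'l) measure"
    and L :: "'l set" and lx :: 'l
    and F :: "'u \<Rightarrow> 'l" and \<Phi> :: "'u \<Rightarrow> real ^ 'd"
    and H :: "(real ^ 'd \<Rightarrow> real) set" and h :: "'l \<Rightarrow> real ^ 'd \<Rightarrow> real"
    and \<Delta> :: "'l \<Rightarrow> real" and M :: nat and l :: 'l
  defines "P \<equiv> (\<Pi>\<^sub>M i\<in>{..<M}. PD) \<Otimes>\<^sub>M PD"
  defines "E \<equiv> {S. \<forall>k\<in>L. Splus F M k S \<noteq> {} \<and> Sminus F M k S \<noteq> {}}"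
  assumes finL: "finite L"
    and lx: "lx \<notin> L"
    and PD_prob: "prob_space PD"
    and PD_sets: "sets PD = sets (MU \<Otimes>\<^sub>M count_space L)"
    and F_meas: "F \<in> MU \<rightarrow>\<^sub>M count_space L"
    and Phi_meas: "\<Phi> \<in> borel_measurable MU"
    and H_meas: "H \<subseteq> borel_measurable borel"
    and h_H: "\<And>k. k \<in> L \<Longrightarrow> h k \<in> H"
    and Delta: "\<And>k. k \<in> L \<Longrightarrow> \<Delta> k \<in> {0<..<1}"
    and E_pos: "measure (\<Pi>\<^sub>M i\<in>{..<M}. PD) E > 0"
    and l: "l \<in> L"
  shows
    "measure P {(S, (u, y)) \<in> space P. S \<in> E \<and> F u = l \<and> y = l
                 \<and> corrector lx F \<Phi> h \<Delta> M S (F u) (\<Phi> u) = l}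
       / measure P {(S, (u, y)) \<in> space P. S \<in> E \<and> F u = l \<and> y = l}
     \<ge> (LINT \<omega>:{(S, (u, y)) \<in> space P. S \<in> E \<and> F u = l \<and> y = l}|P.
            1 - psi (ecdf (\<lambda>u. h l (\<Phi> u)) (Splus F M l (fst \<omega>)) (fst \<omega>)
                          (thr F \<Phi> h \<Delta> M l (fst \<omega>)))
                    (card (Splus F M l (fst \<omega>))))
       / measure P {(S, (u, y)) \<in> space P. S \<in> E \<and> F u = l \<and> y = l}
   \<and> measure P {(S, (u, y)) \<in> space P. S \<in> E \<and> F u = l \<and> y \<noteq> l
                 \<and> corrector lx F \<Phi> h \<Delta> M S (F u) (\<Phi> u) = lx}
       / measure P {(S, (u, y)) \<in> space P. S \<in> E \<and> F u = l \<and> y \<noteq> l}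
     \<ge> (LINT \<omega>:{(S, (u, y)) \<in> space P. S \<in> E \<and> F u = l \<and> y \<noteq> l}|P.
            rho (\<Delta> l) (card (Sminus F M l (fst \<omega>))))
       / measure P {(S, (u, y)) \<in> space P. S \<in> E \<and> F u = l \<and> y \<noteq> l}"
proof -
  have lx_ne: "lx \<noteq> l" using lx l by auto
  have g_m: "(\<lambda>u. h l (\<Phi> u)) \<in> borel_measurable MU"
    using h_H[OF l] H_meas by (intro measurable_compose[OF Phi_meas]) auto
  have dl: "0 < \<Delta> l" "\<Delta> l < 1" using Delta[OF l] by auto
  interpret S: setting MU PD L F "\<lambda>u. h l (\<Phi> u)" M l "\<Delta> l"
    by (intro setting.intro PD_prob PD_sets F_meas g_m finL l dl)
  have P_eq: "P = S.P" by (simp add: P_def)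
  interpret PP: prob_space P unfolding P_eq by (rule S.P_prob)
  have E_eq: "S \<in> E \<longleftrightarrow> S.EE S" for S by (simp add: E_def S.EE_def)
  have thr_eq: "thr F \<Phi> h \<Delta> M l S = pseudo_inv (ecdf (\<lambda>u. h l (\<Phi> u)) (Sminus F M l S) S) (\<Delta> l)" for S
    by (simp add: thr_def)
  have corr: "corrector lx F \<Phi> h \<Delta> M S l z = (if h l z \<le> thr F \<Phi> h \<Delta> M l S then lx else l)" for S z
    by (simp add: corrector_def)
  have D1: "{(S, (u, y)) \<in> space P. S \<in> E \<and> F u = l \<and> y = l} = S.A1"
    unfolding S.A1_def P_eq by (auto simp: E_eq S.pos_def)
  have D2: "{(S, (u, y)) \<in> space P. S \<in> E \<and> F u = l \<and> y \<noteq> l} = S.A2"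
    unfolding S.A2_def P_eq by (auto simp: E_eq S.neg_def)
  have cl: "corrector lx F \<Phi> h \<Delta> M S l z = (if S.rejv S (h l z) then lx else l)" if "S.EE S" for S z
    using S.thr_rej[OF that] by (simp add: corr thr_eq)
  have c1: "(S \<in> E \<and> F u = l \<and> y = l \<and> corrector lx F \<Phi> h \<Delta> M S (F u) (\<Phi> u) = l)
      \<longleftrightarrow> (S.EE S \<and> S.pos (u, y) \<and> \<not> S.rejv S (h l (\<Phi> u)))" for S u y
  proof (cases "S.EE S \<and> F u = l")
    case True thus ?thesis using lx_ne by (simp add: E_eq cl S.pos_def)
  next
    case False thus ?thesis by (auto simp: E_eq S.pos_def)
  qed
  have c2: "(S \<in> E \<and> F u = l \<and> y \<noteq> l \<and> corrector lx F \<Phi> h \<Delta> M S (F u) (\<Phi> u) = lx)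
      \<longleftrightarrow> (S.EE S \<and> S.neg (u, y) \<and> S.rejv S (h l (\<Phi> u)))" for S u y
  proof (cases "S.EE S \<and> F u = l")
    case True thus ?thesis using lx_ne by (simp add: E_eq cl S.neg_def)
  next
    case False thus ?thesis by (auto simp: E_eq S.neg_def)
  qed
  have N1: "{(S, (u, y)) \<in> space P. S \<in> E \<and> F u = l \<and> y = l
                 \<and> corrector lx F \<Phi> h \<Delta> M S (F u) (\<Phi> u) = l} = S.A1 - S.R1"
    unfolding S.A1_def S.R1_def P_eq c1 by auto
  have N2: "{(S, (u, y)) \<in> space P. S \<in> E \<and> F u = l \<and> y \<noteq> l
                 \<and> corrector lx F \<Phi> h \<Delta> M S (F u) (\<Phi> u) = lx} = S.A2 \<inter> S.R1"
    unfolding S.A2_def S.R1_def P_eq c2 by auto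
  have A1m: "S.A1 \<in> sets P" and A2m: "S.A2 \<in> sets P" and R1m: "S.R1 \<in> sets P"
    unfolding P_eq by (rule S.A1_m S.A2_m S.R1_m)+
  have num1: "measure P (S.A1 - S.R1) = measure P S.A1 - measure P (S.A1 \<inter> S.R1)"
    using A1m R1m by (rule PP.finite_measure_Diff')
  have key1: "(LINT \<omega>:S.A1|P. 1 - psi (ecdf (\<lambda>u. h l (\<Phi> u)) (Splus F M l (fst \<omega>)) (fst \<omega>)
                          (thr F \<Phi> h \<Delta> M l (fst \<omega>))) (card (Splus F M l (fst \<omega>))))
        \<le> measure P (S.A1 - S.R1)"
    (is "(LINT \<omega>:S.A1|P. ?f \<omega>) \<le> _")
  proof (cases "set_integrable P S.A1 ?f")
    case False
    hence "(LINT \<omega>:S.A1|P. ?f \<omega>) = 0"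
      by (simp add: set_lebesgue_integral_def set_integrable_def not_integrable_integral_eq)
    thus ?thesis by simp
  next
    case True
    have aavm: "(\<lambda>\<omega>. S.aav (fst \<omega>)) \<in> borel_measurable P" unfolding P_eq by measurable
    have int_ind: "integrable P (indicator S.A1 :: _ \<Rightarrow> real)"
      using A1m by (intro integrable_real_indicator) (auto simp: less_top[symmetric] PP.emeasure_finite)
    have int_ia: "integrable P (\<lambda>\<omega>. indicator S.A1 \<omega> * S.aav (fst \<omega>))"
    proof (unfold P_eq, rule S.bint)
      show "(\<lambda>\<omega>. indicator S.A1 \<omega> * S.aav (fst \<omega>)) \<in> borel_measurable S.P" by measurable
      fix \<omega> show "\<bar>indicator S.A1 \<omega> * S.aav (fst \<omega>)\<bar> \<le> 1"
        using S.aav_bounds[of "fst \<omega>"] by (auto simp: indicator_def)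
    qed
    have si2: "set_integrable P S.A1 (\<lambda>\<omega>. 1 - S.aav (fst \<omega>))"
      unfolding set_integrable_def
    proof (unfold P_eq, rule S.bint)
      show "(\<lambda>\<omega>. indicator S.A1 \<omega> *\<^sub>R (1 - S.aav (fst \<omega>))) \<in> borel_measurable S.P" by measurable
      fix \<omega> show "\<bar>indicator S.A1 \<omega> *\<^sub>R (1 - S.aav (fst \<omega>))\<bar> \<le> 1"
        using S.aav_bounds[of "fst \<omega>"] by (auto simp: indicator_def)
    qed
    have "(LINT \<omega>:S.A1|P. ?f \<omega>) \<le> (LINT \<omega>:S.A1|P. 1 - S.aav (fst \<omega>))"
    proof (rule set_integral_mono[OF True si2])
      fix \<omega> assume w: "\<omega> \<in> S.A1"
      hence ee: "S.EE (fst \<omega>)" by (simp add: S.A1_def)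
      have "ecdf (\<lambda>u. h l (\<Phi> u)) (Splus F M l (fst \<omega>)) (fst \<omega>) (thr F \<Phi> h \<Delta> M l (fst \<omega>)) = S.aav (fst \<omega>)"
        unfolding thr_eq by (rule S.ecdf_aav[OF ee])
      moreover have "S.aav (fst \<omega>) \<le> psi (S.aav (fst \<omega>)) (card (Splus F M l (fst \<omega>)))"
        by (rule psi_ge[OF S.aav_bounds(2)])
      ultimately show "?f \<omega> \<le> 1 - S.aav (fst \<omega>)" by simp
    qed
    also have "(LINT \<omega>:S.A1|P. 1 - S.aav (fst \<omega>)) = integral\<^sup>L P (\<lambda>\<omega>. indicator S.A1 \<omega> - indicator S.A1 \<omega> * S.aav (fst \<omega>))"
      unfolding set_lebesgue_integral_def by (intro Bochner_Integration.integral_cong) (auto simp: algebra_simps)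
    also have "\<dots> = integral\<^sup>L P (indicator S.A1) - integral\<^sup>L P (\<lambda>\<omega>. indicator S.A1 \<omega> * S.aav (fst \<omega>))"
      by (rule Bochner_Integration.integral_diff[OF int_ind int_ia])
    also have "integral\<^sup>L P (\<lambda>\<omega>. indicator S.A1 \<omega> * S.aav (fst \<omega>)) = measure P (S.A1 \<inter> S.R1)"
      unfolding P_eq by (rule S.claim1_core)
    also have "integral\<^sup>L P (indicator S.A1 :: _ \<Rightarrow> real) = measure P S.A1"
      using A1m by (simp add: Int_absorb2 sets.sets_into_space)
    finally show ?thesis using num1 by simp
  qed
  have key2: "(LINT \<omega>:S.A2|P. rho (\<Delta> l) (card (Sminus F M l (fst \<omega>)))) \<le> measure P (S.A2 \<inter> S.R1)"
    (is "(LINT \<omega>:S.A2|P. ?r \<omega>) \<le> _")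
  proof (cases "set_integrable P S.A2 ?r")
    case False
    hence "(LINT \<omega>:S.A2|P. ?r \<omega>) = 0"
      by (simp add: set_lebesgue_integral_def set_integrable_def not_integrable_integral_eq)
    thus ?thesis by simp
  next
    case True
    have si2: "set_integrable P S.A2 (\<lambda>\<omega>. \<Delta> l * S.mmv (fst \<omega>) / (S.mmv (fst \<omega>) + 1))"
      unfolding set_integrable_def
    proof (unfold P_eq, rule S.bint)
      show "(\<lambda>\<omega>. indicator S.A2 \<omega> *\<^sub>R (\<Delta> l * S.mmv (fst \<omega>) / (S.mmv (fst \<omega>) + 1))) \<in> borel_measurable S.P"
        by measurable
      fix \<omega> :: "(nat \<Rightarrow> 'u \<times> 'l) \<times> 'u \<times> 'l"
      have m0: "0 \<le> S.mmv (fst \<omega>)" by (rule S.mmv_nonneg)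
      have "0 \<le> \<Delta> l * S.mmv (fst \<omega>) / (S.mmv (fst \<omega>) + 1)" using dl m0 by simp
      moreover have "\<Delta> l * S.mmv (fst \<omega>) / (S.mmv (fst \<omega>) + 1) \<le> 1"
      proof -
        have "\<Delta> l * S.mmv (fst \<omega>) \<le> S.mmv (fst \<omega>) + 1"
          using mult_left_le_one_le[of "S.mmv (fst \<omega>)" "\<Delta> l"] dl m0 by linarith
        thus ?thesis using m0 by (simp add: divide_le_eq_1)
      qed
      ultimately have "\<bar>\<Delta> l * S.mmv (fst \<omega>) / (S.mmv (fst \<omega>) + 1)\<bar> \<le> 1" by linarith
      thus "\<bar>indicator S.A2 \<omega> *\<^sub>R (\<Delta> l * S.mmv (fst \<omega>) / (S.mmv (fst \<omega>) + 1))\<bar> \<le> 1"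
        by (cases "\<omega> \<in> S.A2") (simp_all only: indicator_simps scaleR_one scaleR_zero_left abs_0, simp_all)
    qed
    have "(LINT \<omega>:S.A2|P. ?r \<omega>) \<le> (LINT \<omega>:S.A2|P. \<Delta> l * S.mmv (fst \<omega>) / (S.mmv (fst \<omega>) + 1))"
    proof (rule set_integral_mono[OF True si2])
      fix \<omega> assume w: "\<omega> \<in> S.A2"
      hence ee: "S.EE (fst \<omega>)" by (simp add: S.A2_def)
      obtain i where "i < M" "S.neg (fst \<omega> i)" using S.EE_neg[OF ee] by blast
      hence "S.mmv (fst \<omega>) \<ge> 1" by (rule S.mmv_ge)
      hence c1: "1 \<le> card (Sminus F M l (fst \<omega>))" using S.card_Sminus[of "fst \<omega>"] by simp
      show "?r \<omega> \<le> \<Delta> l * S.mmv (fst \<omega>) / (S.mmv (fst \<omega>) + 1)"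
        using rho_le[OF dl c1] S.card_Sminus[of "fst \<omega>"] by simp
    qed
    also have "(LINT \<omega>:S.A2|P. \<Delta> l * S.mmv (fst \<omega>) / (S.mmv (fst \<omega>) + 1))
        = integral\<^sup>L P (\<lambda>\<omega>. indicator S.A2 \<omega> * (\<Delta> l * S.mmv (fst \<omega>) / (S.mmv (fst \<omega>) + 1)))"
      unfolding set_lebesgue_integral_def by simp
    also have "\<dots> \<le> measure P (S.A2 \<inter> S.R1)"
      unfolding P_eq by (rule S.claim2_core)
    finally show ?thesis .
  qed
  show ?thesis
    unfolding D1 D2 N1 N2
  proof
    show "(LINT \<omega>:S.A1|P. 1 - psi (ecdf (\<lambda>u. h l (\<Phi> u)) (Splus F M l (fst \<omega>)) (fst \<omega>)
                          (thr F \<Phi> h \<Delta> M l (fst \<omega>))) (card (Splus F M l (fst \<omega>)))) / measure P S.A1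
        \<le> measure P (S.A1 - S.R1) / measure P S.A1"
      by (rule divide_right_mono[OF key1 measure_nonneg])
    show "(LINT \<omega>:S.A2|P. rho (\<Delta> l) (card (Sminus F M l (fst \<omega>)))) / measure P S.A2
        \<le> measure P (S.A2 \<inter> S.R1) / measure P S.A2"
      by (rule divide_right_mono[OF key2 measure_nonneg])
  qed
qed

end
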